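(* Let $m\ge 4$ and let $b_{\lfloor\log m\rfloor}b_{\lfloor\log m\rfloor-1}\cdots b_1b_0$ be the binary representation of $m$, so $b_{\lfloor\log m\rfloor}=1$. On input $a^m$, $\mathsf{RePair}$ produces the rules $X_1\to aa$, $X_i\to X_{i-1}X_{i-1}$ for $2\le i\le\lfloor\log m\rfloor-1$, and the start rule $$S\to X_{\lfloor\log m\rfloor-1}X_{\lfloor\log m\rfloor-1}f_{\lfloor\log m\rfloor-1}(b_{\lfloor\log m\rfloor-1})\cdots f_1(b_1)f_0(b_0).$$ Here $f_0(1)=a$, $f_0(0)=\varepsilon$, and for $i\ge1$, $f_i(1)=X_i$, $f_i(0)=\varepsilon$. In particular, each $X_i$ derives $a^{2^i}$.
   Context: All logarithms are to base 2. A straight-line program (SLP) is a context-free grammar $\mathbb A=(N,\Sigma,P,S)$ with exactly one production $A\to w$, $w\in(N\cup\Sigma)^+$, per nonterminal $A$, and an acyclic "occurs-in-right-hand-side" relation; it derives a single word. For an SLP, a word $\gamma$ over $N\cup\Sigma$ is a maximal string if $|\gamma|\ge2$, $\gamma$ occurs at least twice without overlap in the right-hand sides, and no strictly longer word occurs at least as many times without overlap in the right-hand sides. $\mathsf{RePair}$ on input $w$ starts with the single rule $S\to w$. In each round it selects a maximal string $\gamma$ with the largest number of non-overlapping occurrences, replaces a largest set of pairwise non-overlapping occurrences of $\gamma$ (chosen from left to right) in the right-hand sides by a fresh nonterminal $X$, and adds $X\to\gamma$. It stops when no maximal string exists. *)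

theory Defs
  imports Complex_Main
begin

text \<open>Symbols: terminals T c, nonterminals N n.  The start symbol S is N 0;
  the nonterminal introduced in the k-th round of RePair is N k (fresh naming convention).\<close>
datatype 't sym = T 't | N nat

type_synonym 't gram = "nat \<rightharpoonup> 't sym list"

definition occs :: "'t gram \<Rightarrow> 't sym list \<Rightarrow> (nat \<times> nat) set" where
  "occs G \<gamma> = {(A, p). A \<in> dom G \<and> p + length \<gamma> \<le> length (the (G A))
                        \<and> take (length \<gamma>) (drop p (the (G A))) = \<gamma>}"

definition nonoverlap :: "'t sym list \<Rightarrow> (nat \<times> nat) set \<Rightarrow> bool" where
  "nonoverlap \<gamma> O' = (\<forall>(A, p) \<in> O'. \<forall>(B, q) \<in> O'. A = B \<and> p < q \<longrightarrow> p + length \<gamma> \<le> q)"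

definition nocc :: "'t gram \<Rightarrow> 't sym list \<Rightarrow> nat" where
  "nocc G \<gamma> = Max {card O' | O'. O' \<subseteq> occs G \<gamma> \<and> nonoverlap \<gamma> O'}"

definition maximal_string :: "'t gram \<Rightarrow> 't sym list \<Rightarrow> bool" where
  "maximal_string G \<gamma> = (length \<gamma> \<ge> 2 \<and> nocc G \<gamma> \<ge> 2 \<and>
     (\<forall>\<delta>. length \<delta> > length \<gamma> \<longrightarrow> nocc G \<delta> < nocc G \<gamma>))"

function repl :: "'t sym list \<Rightarrow> 't sym \<Rightarrow> 't sym list \<Rightarrow> 't sym list" where
  "repl \<gamma> X [] = []"
| "repl \<gamma> X (x # xs) =
     (if \<gamma> \<noteq> [] \<and> take (length \<gamma>) (x # xs) = \<gamma>
      then X # repl \<gamma> X (drop (length \<gamma>) (x # xs))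
      else x # repl \<gamma> X xs)"
  by pat_completeness auto
termination by (relation "measure (\<lambda>(_, _, w). length w)") auto

definition repair_step :: "'t gram \<Rightarrow> 't gram \<Rightarrow> bool" where
  "repair_step G G' = (\<exists>\<gamma>. maximal_string G \<gamma> \<and>
      (\<forall>\<delta>. maximal_string G \<delta> \<longrightarrow> nocc G \<delta> \<le> nocc G \<gamma>) \<and>
      G' = (\<lambda>A. map_option (repl \<gamma> (N (card (dom G)))) (G A))(card (dom G) \<mapsto> \<gamma>))"

definition repair_final :: "'t gram \<Rightarrow> bool" where
  "repair_final G = (\<not> (\<exists>\<gamma>. maximal_string G \<gamma>))"

definition repair_init :: "'t \<Rightarrow> nat \<Rightarrow> 't gram" where
  "repair_init a m = [0 \<mapsto> replicate m (T a)]"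

text \<open>Derivation: substitute all nonterminals simultaneously, |dom G| times
  (enough for an acyclic grammar).\<close>
definition subst_once :: "'t gram \<Rightarrow> 't sym list \<Rightarrow> 't sym list" where
  "subst_once G w = concat (map (\<lambda>s. case s of T c \<Rightarrow> [T c]
       | N n \<Rightarrow> (case G n of Some r \<Rightarrow> r | None \<Rightarrow> [N n])) w)"

definition expand :: "'t gram \<Rightarrow> 't sym list \<Rightarrow> 't sym list" where
  "expand G w = (subst_once G ^^ card (dom G)) w"

end

theory Submission
  imports Defs
begin


lemma kbounds:
  fixes m :: nat assumes "m \<ge> 4"
  shows "2 ^ nat \<lfloor>log 2 (real m)\<rfloor> \<le> m \<and> m < 2 ^ (nat \<lfloor>log 2 (real m)\<rfloor> + 1)"
proof -
  have "log 2 (real m) \<ge> 0" using assms by simp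
  then have "\<lfloor>log 2 (real m)\<rfloor> = int (nat \<lfloor>log 2 (real m)\<rfloor>)" by simp
  then have "\<lfloor>log (real (2::nat)) (real m)\<rfloor> = int (nat \<lfloor>log 2 (real m)\<rfloor>)" by simp
  then show ?thesis using floor_log_nat_eq_powr_iff[of 2 m "nat \<lfloor>log 2 (real m)\<rfloor>"] assms by simp
qed

definition sy :: "'t \<Rightarrow> nat \<Rightarrow> 't sym" where
  "sy a i = (if i = 0 then T a else N i)"

lemma sy_inj[simp]: "sy a i = sy a i' \<longleftrightarrow> i = i'"
  by (auto simp: sy_def)

definition LL :: "nat \<Rightarrow> nat \<Rightarrow> nat \<Rightarrow> nat list" where
  "LL m j A = (if A = 0 then replicate (m div 2^j) j @ filter (\<lambda>i. odd (m div 2^i)) (rev [0..<j])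
               else [A-1, A-1])"

definition Gj :: "'t \<Rightarrow> nat \<Rightarrow> nat \<Rightarrow> 't gram" where
  "Gj a m j = (\<lambda>A. if A \<le> j then Some (map (sy a) (LL m j A)) else None)"

lemma dom_Gj: "dom (Gj a m j) = {..j}"
  by (auto simp: Gj_def split: if_splits)

lemma card_dom_Gj: "card (dom (Gj a m j)) = Suc j"
  by (simp add: dom_Gj)

lemma occ_nth:
  assumes "(A, p) \<in> occs (Gj a m j) \<delta>" "i < length \<delta>"
  shows "A \<le> j \<and> p + length \<delta> \<le> length (LL m j A) \<and> \<delta> ! i = sy a (LL m j A ! (p + i))"
proof -
  have A: "A \<le> j" using assms(1) by (auto simp: occs_def dom_Gj)
  have 1: "p + length \<delta> \<le> length (LL m j A)" and 2: "take (length \<delta>) (drop p (map (sy a) (LL m j A))) = \<delta>"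
    using assms(1) A by (auto simp: occs_def Gj_def)
  have "\<delta> ! i = take (length \<delta>) (drop p (map (sy a) (LL m j A))) ! i" using 2 by simp
  also have "\<dots> = sy a (LL m j A ! (p + i))" using 1 assms(2) by simp
  finally show ?thesis using A 1 by simp
qed

lemma L0_P1:
  assumes "i < length (LL m j 0)"
  shows "LL m j 0 ! i = j \<longleftrightarrow> i < m div 2^j"
proof (cases "i < m div 2^j")
  case True then show ?thesis by (simp add: LL_def nth_append)
next
  case False
  let ?ds = "filter (\<lambda>i. odd (m div 2^i)) (rev [0..<j])"
  have "i - m div 2^j < length ?ds" using assms False by (simp add: LL_def)
  then have "?ds ! (i - m div 2^j) \<in> set ?ds" by (rule nth_mem)
  then have "?ds ! (i - m div 2^j) < j" by simp
  then show ?thesis using False by (simp add: LL_def nth_append)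
qed

lemma L0_P2:
  assumes "i < length (LL m j 0)" "i' < length (LL m j 0)" "LL m j 0 ! i = LL m j 0 ! i'"
    "LL m j 0 ! i \<noteq> j"
  shows "i = i'"
proof -
  let ?c = "m div 2^j"
  let ?ds = "filter (\<lambda>i. odd (m div 2^i)) (rev [0..<j])"
  have "\<not> i < ?c" "\<not> i' < ?c" using L0_P1 assms by metis+
  then have e: "LL m j 0 ! i = ?ds ! (i - ?c)" "LL m j 0 ! i' = ?ds ! (i' - ?c)"
    by (simp_all add: LL_def nth_append)
  have d: "distinct ?ds" by simp
  have l: "i - ?c < length ?ds" "i' - ?c < length ?ds" using assms(1,2) \<open>\<not> i < ?c\<close> \<open>\<not> i' < ?c\<close>
    by (auto simp: LL_def)
  have "i - ?c = i' - ?c" using nth_eq_iff_index_eq[OF d l] e assms(3) by simp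
  then show ?thesis using \<open>\<not> i < ?c\<close> \<open>\<not> i' < ?c\<close> by simp
qed

lemma pair_unique:
  assumes "A \<le> j" "B \<le> j" "x + 1 < length (LL m j A)" "y + 1 < length (LL m j B)"
    "LL m j A ! x = LL m j B ! y" "LL m j A ! (x+1) = LL m j B ! (y+1)"
    "\<not> (LL m j A ! x = j \<and> LL m j A ! (x+1) = j)"
  shows "A = B \<and> x = y"
proof (cases "A = 0")
  case A0: True
  show ?thesis
  proof (cases "B = 0")
    case True
    show ?thesis
    proof (cases "LL m j A ! (x+1) = j")
      case True
      then have "x + 1 < m div 2^j" using L0_P1 assms(3) A0 by blast
      then have "LL m j A ! x = j" using L0_P1[of x m j] assms(3) A0 by simp
      then show ?thesis using True assms(7) by simp
    next
      case False
      then show ?thesis using L0_P2[of "x+1" m j "y+1"] assms A0 \<open>B = 0\<close> by simp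
    qed
  next
    case False
    then have "LL m j B ! y = B - 1" "LL m j B ! (y+1) = B - 1" "B - 1 \<noteq> j"
      using assms(2,4) by (auto simp: LL_def nth_Cons split: nat.splits)
    then have "x = x + 1" using L0_P2[of "x" m j "x+1"] assms A0 by simp
    then show ?thesis by simp
  qed
next
  case False
  then have "LL m j A ! x = A - 1" "LL m j A ! (x+1) = A - 1" "A - 1 \<noteq> j" "x = 0"
      using assms(1,3) by (auto simp: LL_def nth_Cons split: nat.splits)
  show ?thesis
  proof (cases "B = 0")
    case True
    then have "y = y + 1" using L0_P2[of "y" m j "y+1"] assms \<open>LL m j A ! x = A - 1\<close>
        \<open>LL m j A ! (x+1) = A - 1\<close> \<open>A - 1 \<noteq> j\<close> by simp
    then show ?thesis by simp
  next
    case BF: False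
    then have "LL m j B ! y = B - 1" "y = 0"
      using assms(2,4) by (auto simp: LL_def nth_Cons split: nat.splits)
    then show ?thesis using \<open>x = 0\<close> \<open>LL m j A ! x = A - 1\<close> assms(5) False BF by simp
  qed
qed

lemma nocc_le:
  assumes "\<And>O'. O' \<subseteq> occs G \<gamma> \<Longrightarrow> nonoverlap \<gamma> O' \<Longrightarrow> card O' \<le> n"
  shows "nocc G \<gamma> \<le> n"
proof -
  let ?S = "{card O' | O'. O' \<subseteq> occs G \<gamma> \<and> nonoverlap \<gamma> O'}"
  have "?S \<subseteq> {..n}" using assms by auto
  then have f: "finite ?S" by (rule finite_subset) simp
  have "0 \<in> ?S" by (rule CollectI, rule exI[of _ "{}"]) (simp add: nonoverlap_def)
  then have ne: "?S \<noteq> {}" by blast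
  show ?thesis unfolding nocc_def using Max_le_iff[OF f ne] assms by blast
qed

lemma finite_occs: "finite (dom G) \<Longrightarrow> finite (occs G \<gamma>)"
proof -
  assume f: "finite (dom G)"
  have "occs G \<gamma> \<subseteq> (SIGMA A:dom G. {..length (the (G A))})" by (auto simp: occs_def)
  moreover have "finite (SIGMA A:dom G. {..length (the (G A))})" using f by blast
  ultimately show ?thesis by (rule finite_subset)
qed

lemma nocc_ge:
  assumes "finite (dom G)" "O' \<subseteq> occs G \<gamma>" "nonoverlap \<gamma> O'"
  shows "card O' \<le> nocc G \<gamma>"
proof -
  let ?S = "{card O' | O'. O' \<subseteq> occs G \<gamma> \<and> nonoverlap \<gamma> O'}"
  have fo: "finite (occs G \<gamma>)" using finite_occs assms(1) .
  have "?S \<subseteq> {..card (occs G \<gamma>)}" using card_mono[OF fo] by auto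
  then have f: "finite ?S" by (rule finite_subset) simp
  have "card O' \<in> ?S" using assms by blast
  then show ?thesis unfolding nocc_def using f by (simp add: Max_ge)
qed

lemma nocc_le1:
  assumes "i + 1 < length \<delta>" "\<not> (\<delta>!i = sy a j \<and> \<delta>!(i+1) = sy a j)"
  shows "nocc (Gj a m j) \<delta> \<le> 1"
proof (rule nocc_le)
  fix O' assume O: "O' \<subseteq> occs (Gj a m j) \<delta>"
  have all: "\<forall>x\<in>O'. \<forall>y\<in>O'. x = y"
  proof (intro ballI)
    fix x y assume "x \<in> O'" "y \<in> O'"
    obtain A p where x: "x = (A, p)" by (cases x)
    obtain B q where y: "y = (B, q)" by (cases y)
    have ox: "(A, p) \<in> occs (Gj a m j) \<delta>" and oy: "(B, q) \<in> occs (Gj a m j) \<delta>"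
      using O \<open>x \<in> O'\<close> \<open>y \<in> O'\<close> x y by auto
    note a1 = occ_nth[OF ox, of i] and a2 = occ_nth[OF ox, of "i+1"]
    note b1 = occ_nth[OF oy, of i] and b2 = occ_nth[OF oy, of "i+1"]
    have "A = B \<and> p + i = q + i"
      apply (rule pair_unique[of A j B "p+i" m "q+i"])
      using a1 a2 b1 b2 assms by (auto simp: add.assoc)
    then show "x = y" using x y by simp
  qed
  show "card O' \<le> 1"
  proof (cases "finite O'")
    case True then show ?thesis using all card_le_Suc0_iff_eq[OF True] by simp
  qed simp
qed

lemma rep_or:
  assumes "length \<delta> \<ge> 2" "\<forall>i. i + 1 < length \<delta> \<longrightarrow> \<delta>!i = s \<and> \<delta>!(i+1) = s"
  shows "\<delta> = replicate (length \<delta>) s"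
proof (rule nth_equalityI)
  fix i assume i: "i < length \<delta>"
  show "\<delta> ! i = replicate (length \<delta>) s ! i"
  proof (cases "i + 1 < length \<delta>")
    case True then show ?thesis using assms(2) i by simp
  next
    case False
    then have "i - 1 + 1 < length \<delta>" "i = i - 1 + 1" using assms(1) i by auto
    then show ?thesis using assms(2) i by (metis length_replicate nth_replicate)
  qed
qed simp

lemma nocc_rep:
  assumes "l \<ge> 2"
  shows "nocc (Gj a m j) (replicate l (sy a j)) \<le> m div 2^j div l"
proof (rule nocc_le)
  let ?c = "m div 2^j"
  fix O' assume O: "O' \<subseteq> occs (Gj a m j) (replicate l (sy a j))"
    and no: "nonoverlap (replicate l (sy a j)) O'"
  have mem: "A = 0 \<and> p + l \<le> ?c" if "(A, p) \<in> O'" for A p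
  proof -
    have o: "(A, p) \<in> occs (Gj a m j) (replicate l (sy a j))" using that O by auto
    note h0 = occ_nth[OF o, of 0] and h1 = occ_nth[OF o, of "l - 1"]
    have e0: "LL m j A ! p = j" "A \<le> j" "p + l \<le> length (LL m j A)" using h0 assms by auto
    have A0: "A = 0"
    proof (rule ccontr)
      assume "A \<noteq> 0"
      then have "LL m j A = [A-1, A-1]" by (simp add: LL_def)
      then have "LL m j A ! p = A - 1" using e0(3) assms by (cases p) auto
      then show False using e0 \<open>A \<noteq> 0\<close> by simp
    qed
    have "LL m j 0 ! (p + (l - 1)) = j" using h1 assms A0 by simp
    then have "p + (l - 1) < ?c" using L0_P1[of "p + (l - 1)" m j] e0(3) A0 assms by simp
    then show ?thesis using A0 assms by simp
  qed
  let ?g = "\<lambda>(A::nat, p). (p + l) div l"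
  have inj: "inj_on ?g O'"
  proof (rule inj_onI)
    fix x y assume x: "x \<in> O'" and y: "y \<in> O'" and e: "?g x = ?g y"
    obtain A p where xx: "x = (A, p)" by (cases x)
    obtain B q where yy: "y = (B, q)" by (cases y)
    have A: "A = 0" "B = 0" using mem x y xx yy by auto
    have key: False if "(0, p') \<in> O'" "(0, q') \<in> O'" "p' < q'" "(p' + l) div l = (q' + l) div l" for p' q'
    proof -
      have "p' + l \<le> q'" using no that unfolding nonoverlap_def by fastforce
      then have "(p' + l + l) div l \<le> (q' + l) div l" by (intro div_le_mono) simp
      moreover have "(p' + l + l) div l = (p' + l) div l + 1" using assms by simp
      ultimately show False using that(4) by simp
    qed
    have "p = q"
    proof (rule ccontr)
      assume "p \<noteq> q"
      then consider "p < q" | "q < p" by arith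
      then show False
        using key[of p q] key[of q p] x y xx yy A e by (cases; simp)
    qed
    then show "x = y" using xx yy A by simp
  qed
  have img: "?g ` O' \<subseteq> {1..?c div l}"
  proof
    fix z assume "z \<in> ?g ` O'"
    then obtain A p where ap: "(A, p) \<in> O'" "z = (p + l) div l" by auto
    then have "p + l \<le> ?c" using mem by blast
    then have "z \<le> ?c div l" using ap by (simp add: div_le_mono)
    moreover have "z \<ge> 1" using ap assms by (simp add: div_greater_zero_iff)
    ultimately show "z \<in> {1..?c div l}" by simp
  qed
  have "card O' \<le> card {1..?c div l}" using card_inj_on_le[OF inj img] by simp
  then show "card O' \<le> ?c div l" by simp
qed

lemma take2: "Suc p < length xs \<Longrightarrow> take 2 (drop p xs) = [xs ! p, xs ! Suc p]"
  by (metis Cons_nth_drop_Suc Suc_lessD numeral_2_eq_2 take_0 take_Suc_Cons)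

lemma nocc_pair_ge:
  "m div 2^j div 2 \<le> nocc (Gj a m j) [sy a j, sy a j]"
proof -
  let ?c = "m div 2^j"
  let ?O = "(\<lambda>t. (0::nat, 2 * t)) ` {..<?c div 2}"
  have sub: "?O \<subseteq> occs (Gj a m j) [sy a j, sy a j]"
  proof
    fix x assume "x \<in> ?O"
    then obtain t where t: "t < ?c div 2" "x = (0, 2 * t)" by auto
    have len: "?c \<le> length (LL m j 0)" by (simp add: LL_def)
    have lt: "Suc (2 * t) < ?c" using t by linarith
    have v: "LL m j 0 ! (2 * t) = j" "LL m j 0 ! Suc (2 * t) = j"
      using L0_P1[of "2*t" m j] L0_P1[of "Suc (2*t)" m j] lt len by auto
    have "take 2 (drop (2*t) (map (sy a) (LL m j 0))) = [sy a j, sy a j]"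
      using take2[of "2*t" "map (sy a) (LL m j 0)"] lt len v by simp
    then show "x \<in> occs (Gj a m j) [sy a j, sy a j]"
      using t lt len by (auto simp: occs_def Gj_def dom_def numeral_2_eq_2)
  qed
  have no: "nonoverlap [sy a j, sy a j] ?O" by (auto simp: nonoverlap_def)
  have "card ?O = ?c div 2" by (subst card_image) (auto simp: inj_on_def)
  then show ?thesis using nocc_ge[OF _ sub no] by (simp add: dom_Gj)
qed



lemma ar1: "4 \<le> (c::nat) \<Longrightarrow> c div 3 < c div 2" by presburger
lemma ar2: "(c::nat) < 4 \<Longrightarrow> c div 2 \<le> 1" by presburger

lemma dich:
  assumes "length \<delta> \<ge> 2"
  shows "nocc (Gj a m j) \<delta> \<le> 1 \<or> \<delta> = replicate (length \<delta>) (sy a j)"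
proof (cases "\<forall>i. i + 1 < length \<delta> \<longrightarrow> \<delta>!i = sy a j \<and> \<delta>!(i+1) = sy a j")
  case True show ?thesis by (rule disjI2, rule rep_or[OF assms True])
next
  case False
  then obtain i where "i + 1 < length \<delta>" "\<not> (\<delta>!i = sy a j \<and> \<delta>!(i+1) = sy a j)" by blast
  then show ?thesis using nocc_le1 by (intro disjI1)
qed

lemma nocc_cases:
  assumes "length \<delta> \<ge> 2"
  obtains "nocc (Gj a m j) \<delta> \<le> 1"
  | "nocc (Gj a m j) \<delta> \<le> m div 2^j div length \<delta>" "\<delta> = replicate (length \<delta>) (sy a j)"
proof -
  from dich[OF assms, of a m j] consider "nocc (Gj a m j) \<delta> \<le> 1" | "\<delta> = replicate (length \<delta>) (sy a j)" by blast
  then show ?thesis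
  proof cases
    case 1 then show ?thesis using that by blast
  next
    case 2
    have "nocc (Gj a m j) (replicate (length \<delta>) (sy a j)) \<le> m div 2^j div length \<delta>"
      by (rule nocc_rep[OF assms])
    then show ?thesis using that(2) 2 by simp
  qed
qed

lemma no_max:
  assumes "m div 2^j < 4"
  shows "\<not> maximal_string (Gj a m j) \<gamma>"
proof
  assume ms: "maximal_string (Gj a m j) \<gamma>"
  then have l: "length \<gamma> \<ge> 2" and n: "nocc (Gj a m j) \<gamma> \<ge> 2" by (auto simp: maximal_string_def)
  have "m div 2^j div length \<gamma> \<le> m div 2^j div 2" using l by (simp add: div_le_mono2)
  also have "\<dots> \<le> 1" using assms by (rule ar2)
  finally have b: "m div 2^j div length \<gamma> \<le> 1" .
  show False
    by (rule nocc_cases[OF l, of a m j]) (use n b in linarith)+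
qed

lemma max_pair:
  assumes "4 \<le> m div 2^j"
  shows "maximal_string (Gj a m j) [sy a j, sy a j]"
proof -
  define c where "c = m div 2^j"
  have p: "c div 2 \<le> nocc (Gj a m j) [sy a j, sy a j]" unfolding c_def by (rule nocc_pair_ge)
  have c3: "c div 3 < c div 2" using assms unfolding c_def by (rule ar1)
  have c2: "2 \<le> c div 2" using assms unfolding c_def by simp
  have "nocc (Gj a m j) \<delta> < nocc (Gj a m j) [sy a j, sy a j]" if "length \<delta> > 2" for \<delta>
  proof -
    have l: "length \<delta> \<ge> 2" using that by simp
    have q: "c div length \<delta> \<le> c div 3" using that by (intro div_le_mono2) auto
    show ?thesis
      by (rule nocc_cases[OF l, of a m j]) (use p c3 c2 q in \<open>simp_all add: c_def\<close>)
  qed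
  then show ?thesis using p c2 unfolding maximal_string_def by auto
qed

lemma max_le:
  assumes "4 \<le> m div 2^j" "maximal_string (Gj a m j) \<delta>"
  shows "nocc (Gj a m j) \<delta> \<le> nocc (Gj a m j) [sy a j, sy a j]"
proof -
  define c where "c = m div 2^j"
  have p: "c div 2 \<le> nocc (Gj a m j) [sy a j, sy a j]" unfolding c_def by (rule nocc_pair_ge)
  have c2: "2 \<le> c div 2" using assms unfolding c_def by simp
  have l: "length \<delta> \<ge> 2" using assms(2) by (simp add: maximal_string_def)
  have q: "c div length \<delta> \<le> c div 2" using l by (intro div_le_mono2) auto
  show ?thesis
    by (rule nocc_cases[OF l, of a m j]) (use p c2 q in \<open>simp_all add: c_def\<close>)
qed

lemma uniq:
  assumes "4 \<le> m div 2^j" "maximal_string (Gj a m j) \<gamma>"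
    "nocc (Gj a m j) [sy a j, sy a j] \<le> nocc (Gj a m j) \<gamma>"
  shows "\<gamma> = [sy a j, sy a j]"
proof -
  define c where "c = m div 2^j"
  have p: "c div 2 \<le> nocc (Gj a m j) [sy a j, sy a j]" unfolding c_def by (rule nocc_pair_ge)
  have c3: "c div 3 < c div 2" using assms unfolding c_def by (intro ar1)
  have c2: "2 \<le> c div 2" using assms unfolding c_def by simp
  have l: "length \<gamma> \<ge> 2" using assms(2) by (simp add: maximal_string_def)
  show ?thesis
  proof (rule nocc_cases[OF l, of a m j])
    assume "nocc (Gj a m j) \<gamma> \<le> 1"
    then show ?thesis using p c2 assms(3) by simp
  next
    assume r: "nocc (Gj a m j) \<gamma> \<le> m div 2 ^ j div length \<gamma>" and g: "\<gamma> = replicate (length \<gamma>) (sy a j)"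
    have "length \<gamma> = 2"
    proof (rule ccontr)
      assume "length \<gamma> \<noteq> 2"
      then have "c div length \<gamma> \<le> c div 3" using l by (intro div_le_mono2) auto
      then show False using r p c3 assms(3) unfolding c_def by simp
    qed
    then show ?thesis using g by (simp add: numeral_2_eq_2)
  qed
qed

lemma repl_id: "s \<notin> set t \<Longrightarrow> repl [s, s] X t = t"
  by (induction t) auto

lemma repl_rep: "s \<notin> set t \<Longrightarrow>
  repl [s, s] X (replicate c s @ t) = replicate (c div 2) X @ (if odd c then [s] else []) @ t"
proof (induction c rule: less_induct)
  case (less c)
  show ?case
  proof (cases c)
    case 0 then show ?thesis using repl_id less.prems by simp
  next
    case (Suc n)
    show ?thesis
    proof (cases n)
      case 0
      have "repl [s, s] X (s # t) = s # t"
        using less.prems repl_id[OF less.prems] by (cases t) auto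
      then show ?thesis using Suc 0 by simp
    next
      case (Suc n')
      have "repl [s, s] X (replicate c s @ t) = X # repl [s,s] X (replicate n' s @ t)"
        using \<open>c = Suc n\<close> Suc by simp
      then show ?thesis using less.IH[of n'] less.prems \<open>c = Suc n\<close> Suc by simp
    qed
  qed
qed


lemma upd:
  "(\<lambda>A. map_option (repl [sy a j, sy a j] (N (Suc j))) (Gj a m j A))(Suc j \<mapsto> [sy a j, sy a j])
   = Gj a m (Suc j)"
proof (rule ext)
  fix A
  let ?s = "sy a j"
  let ?c = "m div 2^j"
  let ?ds = "filter (\<lambda>i. odd (m div 2^i)) (rev [0..<j])"
  have nin: "?s \<notin> set (map (sy a) ?ds)" by auto
  have c2: "m div 2 ^ Suc j = ?c div 2" by (metis div_mult2_eq power_Suc2)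
  have c2': "m div (2 * 2 ^ j) = ?c div 2" using c2 by simp
  show "((\<lambda>A. map_option (repl [?s, ?s] (N (Suc j))) (Gj a m j A))(Suc j \<mapsto> [?s, ?s])) A
        = Gj a m (Suc j) A"
  proof (cases "A = 0")
    case True
    have "repl [?s, ?s] (N (Suc j)) (map (sy a) (LL m j 0))
        = replicate (?c div 2) (N (Suc j)) @ (if odd ?c then [?s] else []) @ map (sy a) ?ds"
      using repl_rep[OF nin, of "N (Suc j)" ?c] by (simp add: LL_def)
    moreover have "map (sy a) (LL m (Suc j) 0)
        = replicate (?c div 2) (N (Suc j)) @ (if odd ?c then [?s] else []) @ map (sy a) ?ds"
      by (simp add: LL_def c2 c2' sy_def)
    ultimately show ?thesis using True by (simp add: Gj_def)
  next
    case False
    then show ?thesis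
      using repl_id[of ?s "[sy a (A-1), sy a (A-1)]" "N (Suc j)"]
      by (auto simp: Gj_def LL_def)
  qed
qed



lemma step_iff:
  assumes "4 \<le> m div 2^j"
  shows "repair_step (Gj a m j) G' \<longleftrightarrow> G' = Gj a m (Suc j)"
proof
  assume "repair_step (Gj a m j) G'"
  then obtain \<gamma> where ms: "maximal_string (Gj a m j) \<gamma>"
    and mx: "\<forall>\<delta>. maximal_string (Gj a m j) \<delta> \<longrightarrow> nocc (Gj a m j) \<delta> \<le> nocc (Gj a m j) \<gamma>"
    and G': "G' = (\<lambda>A. map_option (repl \<gamma> (N (card (dom (Gj a m j))))) (Gj a m j A))(card (dom (Gj a m j)) \<mapsto> \<gamma>)"
    unfolding repair_step_def by (elim exE conjE) 
  have "\<gamma> = [sy a j, sy a j]"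
    by (rule uniq[OF assms ms mx[rule_format, OF max_pair[OF assms]]])
  then show "G' = Gj a m (Suc j)" using G' upd[of a j m] by (simp only: card_dom_Gj)
next
  assume G': "G' = Gj a m (Suc j)"
  show "repair_step (Gj a m j) G'"
    unfolding repair_step_def
    apply (rule exI[of _ "[sy a j, sy a j]"])
    apply (intro conjI allI impI)
      apply (rule max_pair[OF assms])
     apply (erule max_le[OF assms])
    using G' upd[of a j m] by (simp only: card_dom_Gj)
qed

lemma final_Gj: "m div 2^j < 4 \<Longrightarrow> repair_final (Gj a m j)"
  unfolding repair_final_def using no_max[of m j a] by simp

lemma no_step: "m div 2^j < 4 \<Longrightarrow> \<not> repair_step (Gj a m j) G'"
  unfolding repair_step_def using no_max[of m j a] by simp

lemma concat_f: "concat (map (\<lambda>i. if b i then (if i = 0 then [T a] else [N i]) else []) xs)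
   = map (sy a) (filter b xs)"
  by (induction xs) (auto simp: sy_def)

lemma concat_rep2: "concat (replicate r [y, y]) = replicate (2 * r) y"
  by (induction r) auto

lemma concat_rep1: "concat (replicate r [y]) = replicate r y"
  by (induction r) auto

lemma subst_rep:
  assumes "i \<le> K"
  shows "subst_once (Gj a m K) (replicate r (sy a i))
       = (if i = 0 then replicate r (sy a 0) else replicate (2*r) (sy a (i-1)))"
proof (cases "i = 0")
  case True
  then show ?thesis by (simp add: subst_once_def sy_def concat_rep1)
next
  case False
  have "Gj a m K i = Some [sy a (i-1), sy a (i-1)]" using False assms by (simp add: Gj_def LL_def)
  then show ?thesis using False by (simp add: subst_once_def concat_rep2 sy_def)
qed

lemma funpow_rep:
  assumes "i \<le> K"
  shows "(subst_once (Gj a m K) ^^ n) (replicate r (sy a i))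
       = replicate (r * 2 ^ min n i) (sy a (i - min n i))"
  using assms
proof (induction n arbitrary: r i)
  case 0 then show ?case by simp
next
  case (Suc n)
  show ?case
  proof (cases "i = 0")
    case True
    then show ?thesis using Suc subst_rep[OF Suc.prems, of a m r]
      by (simp only: funpow_Suc_right comp_def) simp
  next
    case False
    have "(subst_once (Gj a m K) ^^ Suc n) (replicate r (sy a i))
        = (subst_once (Gj a m K) ^^ n) (replicate (2*r) (sy a (i-1)))"
      using subst_rep[OF Suc.prems, of a m r] False by (simp only: funpow_Suc_right comp_def) simp
    also have "\<dots> = replicate (2 * r * 2 ^ min n (i-1)) (sy a (i - 1 - min n (i-1)))"
      using Suc.IH[of "i-1" "2*r"] Suc.prems by simp
    also have "\<dots> = replicate (r * 2 ^ min (Suc n) i) (sy a (i - min (Suc n) i))"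
    proof -
      have "min (Suc n) i = Suc (min n (i-1))" using False by simp
      then show ?thesis by (simp add: algebra_simps)
    qed
    finally show ?thesis .
  qed
qed

lemma reach:
  assumes "\<And>j. j < K \<Longrightarrow> 4 \<le> m div 2^j" "m div 2^K < 4"
    "repair_step\<^sup>*\<^sup>* (Gj a m 0) G"
  shows "\<exists>j\<le>K. G = Gj a m j"
  using assms(3)
proof (induction rule: rtranclp_induct)
  case base then show ?case by blast
next
  case (step y z)
  then obtain j where j: "j \<le> K" "y = Gj a m j" by (elim exE conjE)
  show ?case
  proof (cases "j < K")
    case True
    have "z = Gj a m (Suc j)" using step_iff[OF assms(1)[OF True], of a z] step(2) j(2) by simp
    then show ?thesis using True by (intro exI[of _ "Suc j"]) simp
  next
    case False
    then have "j = K" using j by simp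
    then show ?thesis using no_step[OF assms(2), of a z] step(2) j(2) by simp
  qed
qed

lemma reach2:
  assumes "\<And>j. j < K \<Longrightarrow> 4 \<le> m div 2^j"
  shows "j \<le> K \<Longrightarrow> repair_step\<^sup>*\<^sup>* (Gj a m 0) (Gj a m j)"
proof (induction j)
  case 0 then show ?case by simp
next
  case (Suc j)
  then have "repair_step\<^sup>*\<^sup>* (Gj a m 0) (Gj a m j)" by simp
  moreover have "repair_step (Gj a m j) (Gj a m (Suc j))"
  proof -
    have "j < K" using Suc.prems by simp
    then show ?thesis using step_iff[OF assms[of j], of a "Gj a m (Suc j)"] by simp
  qed
  ultimately show ?case by (metis rtranclp.rtrancl_into_rtrancl)
qed

lemma init_eq: "repair_init a m = Gj a m 0"
  by (rule ext) (simp add: repair_init_def Gj_def LL_def sy_def)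



theorem mainTheorem2:
  fixes m :: nat and a :: 't
  assumes "m \<ge> 4"
  defines "k \<equiv> nat \<lfloor>log 2 (real m)\<rfloor>"
  defines "b \<equiv> (\<lambda>i. odd (m div 2 ^ i))"
  defines "f \<equiv> (\<lambda>i. if b i then (if i = 0 then [T a] else [N i]) else [])"
  defines "Gexp \<equiv> (\<lambda>A. if A = 0 then Some ([N (k - 1), N (k - 1)] @ concat (map f (rev [0..<k])))
                      else if A = 1 then Some [T a, T a]
                      else if 2 \<le> A \<and> A \<le> k - 1 then Some [N (A - 1), N (A - 1)]
                      else None) :: 't gram"
  shows "{G. repair_step\<^sup>*\<^sup>* (repair_init a m) G \<and> repair_final G} = {Gexp}
         \<and> (\<forall>i \<in> {1..k - 1}. expand Gexp [N i] = replicate (2 ^ i) (T a))"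
proof -
  have kb: "2 ^ k \<le> m" "m < 2 ^ (k + 1)" using kbounds[OF assms(1)] unfolding k_def by auto
  have "k \<ge> 2"
  proof (rule ccontr)
    assume "\<not> k \<ge> 2"
    then have "2 ^ (k+1) \<le> (2::nat) ^ 2" by (intro power_increasing) auto
    then show False using kb assms(1) by simp
  qed
  define K where "K = k - 1"
  have kK: "k = Suc K" "K \<ge> 1" using \<open>k \<ge> 2\<close> unfolding K_def by auto
  have h1: "4 \<le> m div 2^j" if "j < K" for j
  proof -
    have "(2::nat) ^ 2 \<le> 2 ^ (k - j)" using that kK by (intro power_increasing) auto
    also have "2 ^ (k - j) = (2::nat) ^ k div 2 ^ j" using that kK by (simp add: power_diff)
    also have "\<dots> \<le> m div 2 ^ j" using kb(1) by (rule div_le_mono)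
    finally show ?thesis by simp
  qed
  have h2: "m div 2^K < 4"
  proof -
    have "m < 4 * 2 ^ K" using kb kK by simp
    then show ?thesis by (simp add: div_less_iff_less_mult)
  qed
  have h3: "2 \<le> m div 2^K"
  proof -
    have "2 * 2 ^ K div 2 ^ K \<le> m div 2 ^ K" using kb kK by (intro div_le_mono) simp
    then show ?thesis by simp
  qed
  have c23: "m div 2^K = 2 \<or> m div 2^K = 3" using h2 h3 by linarith
  have GE: "Gexp = Gj a m K"
  proof (rule ext)
    fix A
    show "Gexp A = Gj a m K A"
    proof (cases "A = 0")
      case True
      have cf: "concat (map f xs) = map (sy a) (filter b xs)" for xs
        unfolding f_def by (rule concat_f)
      have r: "rev [0..<k] = K # rev [0..<K]" using kK by simp
      have sK: "sy a K = N K" using kK by (simp add: sy_def)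
      have k1: "k - 1 = K" unfolding K_def ..
      have fK: "f K = (if odd (m div 2^K) then [N K] else [])" using kK unfolding f_def b_def by simp
      have g: "Gexp A = Some ([N K, N K] @ f K @ map (sy a) (filter b (rev [0..<K])))"
        using True kK by (simp add: Gexp_def r cf)
      have j: "Gj a m K A = Some (map (sy a) (replicate (m div 2^K) K) @ map (sy a) (filter b (rev [0..<K])))"
        using True by (simp add: Gj_def LL_def b_def)
      from c23 show ?thesis
      proof
        assume c: "m div 2^K = 2"
        have "replicate (m div 2^K) K = [K, K]" using c by (simp add: numeral_2_eq_2)
        then show ?thesis using g j fK c sK by simp
      next
        assume c: "m div 2^K = 3"
        have "replicate (m div 2^K) K = [K, K, K]" using c by (simp add: numeral_3_eq_3)
        then show ?thesis using g j fK c sK by simp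
      qed
    next
      case False
      then show ?thesis using kK by (auto simp: Gexp_def Gj_def LL_def sy_def K_def[symmetric])
    qed
  qed
  have part1: "{G. repair_step\<^sup>*\<^sup>* (repair_init a m) G \<and> repair_final G} = {Gexp}"
  proof (intro equalityI subsetI)
    fix G assume "G \<in> {G. repair_step\<^sup>*\<^sup>* (repair_init a m) G \<and> repair_final G}"
    then have r: "repair_step\<^sup>*\<^sup>* (Gj a m 0) G" and fin: "repair_final G" by (simp_all add: init_eq)
    have ex: "\<exists>j\<le>K. G = Gj a m j" by (rule reach[OF _ h2 r]) (rule h1)
    obtain j where j: "j \<le> K" "G = Gj a m j" using ex by (elim exE conjE)
    have "j = K"
    proof (rule ccontr)
      assume "j \<noteq> K"
      then have "j < K" using j by simp
      then have "maximal_string G [sy a j, sy a j]" using max_pair[OF h1] j(2) by simp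
      then show False using fin unfolding repair_final_def by blast
    qed
    then show "G \<in> {Gexp}" using j GE by simp
  next
    fix G assume "G \<in> {Gexp}"
    then have G: "G = Gj a m K" using GE by simp
    have "repair_step\<^sup>*\<^sup>* (Gj a m 0) (Gj a m K)" by (rule reach2) (rule h1, simp, simp)
    then have "repair_step\<^sup>*\<^sup>* (repair_init a m) G" using G by (simp add: init_eq)
    moreover have "repair_final G" using final_Gj[OF h2] G by simp
    ultimately show "G \<in> {G. repair_step\<^sup>*\<^sup>* (repair_init a m) G \<and> repair_final G}" by simp
  qed
  have part2: "expand Gexp [N i] = replicate (2 ^ i) (T a)" if i: "i \<in> {1..k - 1}" for i
  proof -
    have iK: "1 \<le> i" "i \<le> K" using i unfolding K_def by auto
    have "[N i] = replicate 1 (sy a i)" using iK by (simp add: sy_def)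
    then have "expand Gexp [N i] = (subst_once (Gj a m K) ^^ k) (replicate 1 (sy a i))"
      by (simp add: expand_def GE card_dom_Gj kK)
    also have "\<dots> = replicate (1 * 2 ^ min k i) (sy a (i - min k i))" by (rule funpow_rep[OF iK(2)])
    also have "\<dots> = replicate (2 ^ i) (T a)" using iK kK by (simp add: sy_def)
    finally show ?thesis .
  qed
  show ?thesis using part1 part2 by blast
qed

end
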